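(* Let $\mathcal C$ be a class of finite simple graphs and let $f:\mathbb{N}\to\mathbb{N}$ be an unbounded non-decreasing function with $f(x)\le x$ for all $x$. If $\sup_{G\in\mathcal C} N_f(G,r)<\infty$ for every $r\in\mathbb{N}$, then $\mathcal C$ has bounded expansion.
   Context: For a finite simple graph $G$, a function $f:\mathbb{N}\to\mathbb{N}$ and a positive integer $p$, $N_f(G,p)$ denotes the minimum number of colours in a colouring of the edges of $G$ such that every cycle $\gamma$ of $G$ receives at least $\min(f(|\gamma|),p+1)$ distinct colours, where $|\gamma|$ is the length of $\gamma$. A simple graph $H$ is a shallow minor of $G$ at depth $r$ if there are pairwise vertex-disjoint subtrees $T_1,\dots,T_k$ of $G$, each having a root from which every vertex of the tree is at distance at most $r$ in the tree, such that $H$ is isomorphic to a subgraph of the graph with vertex set $\{T_1,\dots,T_k\}$ in which $T_i,T_j$ are adjacent iff some edge of $G$ joins a vertex of $T_i$ to a vertex of $T_j$. $\nabla_r(G)$ is the maximum of $\|H\|/|H|$ over all shallow minors $H$ of $G$ at depth $r$. A class $\mathcal C$ has bounded expansion if $\sup_{G\in\mathcal C}\nabla_r(G)<\infty$ for every integer $r\ge 0$. *)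

theory Defs
  imports Complex_Main
begin

type_synonym 'a graph = "'a set \<times> 'a set set"

definition simple_graph :: "'a graph \<Rightarrow> bool" where
  "simple_graph G \<longleftrightarrow> finite (fst G) \<and>
     (\<forall>e\<in>snd G. \<exists>u v. u \<noteq> v \<and> u \<in> fst G \<and> v \<in> fst G \<and> e = {u, v})"

definition cycle_edges :: "'a list \<Rightarrow> 'a set set" where
  "cycle_edges vs = (\<lambda>i. {vs ! i, vs ! ((i + 1) mod length vs)}) ` {..<length vs}"

definition is_cycle :: "'a graph \<Rightarrow> 'a list \<Rightarrow> bool" where
  "is_cycle G vs \<longleftrightarrow> length vs \<ge> 3 \<and> distinct vs \<and> set vs \<subseteq> fst G \<and>
     cycle_edges vs \<subseteq> snd G"

definition N_f :: "(nat \<Rightarrow> nat) \<Rightarrow> 'a graph \<Rightarrow> nat \<Rightarrow> nat" where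
  "N_f f G p = (LEAST k. \<exists>c :: 'a set \<Rightarrow> nat. c ` snd G \<subseteq> {..<k} \<and>
      (\<forall>vs. is_cycle G vs \<longrightarrow> card (c ` cycle_edges vs) \<ge> min (f (length vs)) (p + 1)))"

definition is_walk :: "'a graph \<Rightarrow> 'a list \<Rightarrow> bool" where
  "is_walk G xs \<longleftrightarrow> xs \<noteq> [] \<and> set xs \<subseteq> fst G \<and>
     (\<forall>i. Suc i < length xs \<longrightarrow> {xs ! i, xs ! Suc i} \<in> snd G)"

definition dist_le :: "'a graph \<Rightarrow> 'a \<Rightarrow> 'a \<Rightarrow> nat \<Rightarrow> bool" where
  "dist_le G u v r \<longleftrightarrow> (\<exists>xs. is_walk G xs \<and> hd xs = u \<and> last xs = v \<and> length xs \<le> r + 1)"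

definition connected_graph :: "'a graph \<Rightarrow> bool" where
  "connected_graph G \<longleftrightarrow> (\<forall>u\<in>fst G. \<forall>v\<in>fst G. \<exists>r. dist_le G u v r)"

definition is_tree :: "'a graph \<Rightarrow> bool" where
  "is_tree G \<longleftrightarrow> simple_graph G \<and> fst G \<noteq> {} \<and> connected_graph G \<and> (\<nexists>vs. is_cycle G vs)"

definition rooted_subtree :: "'a graph \<Rightarrow> nat \<Rightarrow> 'a graph \<Rightarrow> bool" where
  "rooted_subtree G r T \<longleftrightarrow> fst T \<subseteq> fst G \<and> snd T \<subseteq> snd G \<and> is_tree T \<and>
     (\<exists>root\<in>fst T. \<forall>v\<in>fst T. dist_le T root v r)"

definition trees_adjacent :: "'a graph \<Rightarrow> 'a graph \<Rightarrow> 'a graph \<Rightarrow> bool" where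
  "trees_adjacent G T1 T2 \<longleftrightarrow> (\<exists>x\<in>fst T1. \<exists>y\<in>fst T2. {x, y} \<in> snd G)"

definition shallow_minor_model ::
  "'a graph \<Rightarrow> nat \<Rightarrow> 'a graph set \<Rightarrow> 'a graph graph \<Rightarrow> bool" where
  "shallow_minor_model G r Ts H \<longleftrightarrow>
     (\<forall>T\<in>Ts. rooted_subtree G r T) \<and>
     (\<forall>T1\<in>Ts. \<forall>T2\<in>Ts. T1 \<noteq> T2 \<longrightarrow> fst T1 \<inter> fst T2 = {}) \<and>
     fst H \<subseteq> Ts \<and>
     snd H \<subseteq> {{T1, T2} | T1 T2. T1 \<in> fst H \<and> T2 \<in> fst H \<and> T1 \<noteq> T2 \<and> trees_adjacent G T1 T2}"

text \<open>nabla_r(G): maximum of ||H||/|H| over shallow minors H at depth r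
(isomorphism-invariant, so it suffices to range over the concrete models).\<close>

definition nabla :: "nat \<Rightarrow> 'a graph \<Rightarrow> real" where
  "nabla r G = Sup {real (card (snd H)) / real (card (fst H)) | H. \<exists>Ts. shallow_minor_model G r Ts H}"

definition bounded_expansion :: "'a graph set \<Rightarrow> bool" where
  "bounded_expansion C \<longleftrightarrow> (\<forall>r. \<exists>M::real. \<forall>G\<in>C. nabla r G \<le> M)"

end

theory Submission
  imports Defs
begin


fun pe :: "'a list \<Rightarrow> 'a set set" where
  "pe (x#y#zs) = insert {x,y} (pe (y#zs))"
| "pe _ = {}"

lemma pe_Cons: "xs \<noteq> [] \<Longrightarrow> pe (x#xs) = insert {x, hd xs} (pe xs)"
  by (cases xs) auto

lemma pe_nth: "e \<in> pe xs \<longleftrightarrow> (\<exists>i. Suc i < length xs \<and> e = {xs!i, xs!Suc i})"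
proof (induction xs rule: pe.induct)
  case (1 x y zs)
  show ?case
  proof
    assume "e \<in> pe (x # y # zs)"
    then consider "e = {x,y}" | "e \<in> pe (y#zs)" by auto
    then show "\<exists>i. Suc i < length (x # y # zs) \<and> e = {(x # y # zs) ! i, (x # y # zs) ! Suc i}"
    proof cases
      case 1 then show ?thesis by (intro exI[of _ 0]) auto
    next
      case 2 then obtain i where "Suc i < length (y#zs)" "e = {(y#zs)!i, (y#zs)! Suc i}" using "1.IH" by auto
      then show ?thesis by (intro exI[of _ "Suc i"]) auto
    qed
  next
    assume "\<exists>i. Suc i < length (x # y # zs) \<and> e = {(x # y # zs) ! i, (x # y # zs) ! Suc i}"
    then obtain i where i: "Suc i < length (x # y # zs)" "e = {(x # y # zs) ! i, (x # y # zs) ! Suc i}" by blast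
    show "e \<in> pe (x#y#zs)"
    proof (cases i)
      case 0 then show ?thesis using i by auto
    next
      case (Suc j) then show ?thesis using i "1.IH" by auto
    qed
  qed
qed auto

lemma pe_append1: "pe xs \<subseteq> pe (xs @ ys)"
  by (induction xs rule: pe.induct) (auto simp: pe_Cons)

lemma pe_Cons_sub: "pe zs \<subseteq> pe (x#zs)"
  by (cases zs) auto

lemma pe_append2: "pe ys \<subseteq> pe (xs @ ys)"
  by (induction xs) (use pe_Cons_sub in fastforce)+

lemma pe_split: "pe (xs @ y # ys) = pe (xs @ [y]) \<union> pe (y # ys)"
  by (induction xs rule: pe.induct) auto

lemma pe_append: "xs \<noteq> [] \<Longrightarrow> ys \<noteq> [] \<Longrightarrow> pe (xs @ ys) = pe xs \<union> pe ys \<union> {{last xs, hd ys}}"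
proof (induction xs)
  case (Cons x xs)
  show ?case
  proof (cases "xs = []")
    case True then show ?thesis using Cons.prems by (simp add: pe_Cons)
  next
    case False
    then have "pe ((x#xs) @ ys) = insert {x, hd xs} (pe (xs @ ys))" using pe_Cons[of "xs @ ys" x] by simp
    then show ?thesis using Cons False by (auto simp: pe_Cons)
  qed
qed simp

lemma pe_rev: "pe (rev xs) = pe xs"
proof (induction xs)
  case (Cons x xs)
  show ?case
  proof (cases "xs = []")
    case False
    then have "pe (rev (x#xs)) = pe (rev xs) \<union> pe [x] \<union> {{last (rev xs), x}}"
      using pe_append[of "rev xs" "[x]"] by simp
    also have "\<dots> = pe (x#xs)" using False Cons.IH by (auto simp: pe_Cons last_rev insert_commute)
    finally show ?thesis .
  qed simp
qed simp

lemma finite_pe: "finite (pe xs)"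
  by (induction xs rule: pe.induct) auto

lemma card_pe: "card (pe xs) \<le> length xs - 1"
  by (induction xs rule: pe.induct) (auto intro: le_trans[OF card_insert_le_m1])

lemma set_pe: "e \<in> pe xs \<Longrightarrow> e \<subseteq> set xs"
  by (induction xs rule: pe.induct) auto

lemma walk_shorten:
  "xs \<noteq> [] \<Longrightarrow> \<exists>ys. distinct ys \<and> ys \<noteq> [] \<and> hd ys = hd xs \<and> last ys = last xs \<and> set ys \<subseteq> set xs \<and> pe ys \<subseteq> pe xs"
proof (induction "length xs" arbitrary: xs rule: less_induct)
  case less
  show ?case
  proof (cases "distinct xs")
    case True then show ?thesis using less.prems by blast
  next
    case False
    then obtain a b c y where xs: "xs = a @ [y] @ b @ [y] @ c" using not_distinct_decomp by blast
    let ?xs' = "a @ y # c"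
    have "length ?xs' < length xs" using xs by simp
    then obtain ys where ys: "distinct ys" "ys \<noteq> []" "hd ys = hd ?xs'" "last ys = last ?xs'" "set ys \<subseteq> set ?xs'" "pe ys \<subseteq> pe ?xs'"
      using less.hyps[of ?xs'] by auto
    have "pe ?xs' = pe (a @ [y]) \<union> pe (y # c)" by (rule pe_split)
    also have "\<dots> \<subseteq> pe xs"
      using pe_append1[of "a @ [y]" "b @ [y] @ c"] pe_append2[of "y # c" "a @ y # b"] xs by auto
    finally have "pe ?xs' \<subseteq> pe xs" .
    moreover have "hd ?xs' = hd xs" using xs by (cases a) auto
    moreover have "last ?xs' = last xs" using xs by (cases c) auto
    moreover have "set ?xs' \<subseteq> set xs" using xs by auto
    ultimately show ?thesis using ys by (intro exI[of _ ys]) auto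
  qed
qed

lemma cycle_edges_pe: "vs \<noteq> [] \<Longrightarrow> cycle_edges vs \<subseteq> pe (vs @ [hd vs])"
proof
  fix e assume ne: "vs \<noteq> []" and "e \<in> cycle_edges vs"
  then obtain i where i: "i < length vs" "e = {vs ! i, vs ! ((i + 1) mod length vs)}"
    unfolding cycle_edges_def by auto
  show "e \<in> pe (vs @ [hd vs])"
    unfolding pe_nth
  proof (intro exI[of _ i] conjI)
    show "Suc i < length (vs @ [hd vs])" using i by simp
    show "e = {(vs @ [hd vs]) ! i, (vs @ [hd vs]) ! Suc i}"
    proof (cases "Suc i < length vs")
      case True then show ?thesis using i by (simp add: nth_append)
    next
      case False then have "Suc i = length vs" using i by simp
      then show ?thesis using i ne by (simp add: nth_append hd_conv_nth)
    qed
  qed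
qed

lemma walk_pe: "is_walk T xs \<Longrightarrow> pe xs \<subseteq> snd T"
  unfolding is_walk_def by (auto simp: pe_nth)



lemma is_cycle_mono: "is_cycle (V',E') vs \<Longrightarrow> V' \<subseteq> V \<Longrightarrow> E' \<subseteq> E \<Longrightarrow> is_cycle (V,E) vs"
  unfolding is_cycle_def by auto

lemma dense_cycle:
  fixes V :: "'b set" and E :: "'b set set" and d :: nat
  assumes "finite V" "E \<subseteq> {{u,v} | u v. u \<in> V \<and> v \<in> V \<and> u \<noteq> v}" "card E > d * card V" "d \<ge> 1"
  shows "\<exists>vs. is_cycle (V,E) vs \<and> length vs \<ge> d + 2"
  using assms
proof (induction "card V" arbitrary: V E rule: less_induct)
  case less
  have finE: "finite E"
    by (rule finite_subset[OF _ finite_Pow_iff[THEN iffD2, OF less.prems(1)]]) (use less.prems(2) in auto)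
  define nb where "nb v = {w. {v,w} \<in> E}" for v
  have nbV: "nb v \<subseteq> V" for v using less.prems(2) unfolding nb_def by (auto simp: doubleton_eq_iff)
  show ?case
  proof (cases "\<exists>v\<in>V. card (nb v) \<le> d")
    case True
    then obtain v where v: "v \<in> V" "card (nb v) \<le> d" by blast
    define V' where "V' = V - {v}"
    define E' where "E' = {e\<in>E. v \<notin> e}"
    have cV: "card V = Suc (card V')" unfolding V'_def using v less.prems(1)
      by (metis card_Suc_Diff1)
    have "E - E' \<subseteq> (\<lambda>w. {v,w}) ` nb v"
    proof
      fix e assume "e \<in> E - E'"
      then have "e \<in> E" "v \<in> e" unfolding E'_def by auto
      then obtain a b where "e = {a,b}" using less.prems(2) by blast
      then have "e = {v, if a = v then b else a}" using \<open>v \<in> e\<close> by auto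
      then show "e \<in> (\<lambda>w. {v,w}) ` nb v" using \<open>e \<in> E\<close> unfolding nb_def by auto
    qed
    then have "card (E - E') \<le> card (nb v)"
      using card_image_le[of "nb v" "\<lambda>w. {v,w}"] finite_subset[OF nbV less.prems(1)]
      by (meson card_mono finite_imageI le_trans)
    moreover have "card E \<le> card E' + card (E - E')"
      proof -
      have "E = E' \<union> (E - E')" unfolding E'_def by auto
      then show ?thesis by (metis card_Un_le)
    qed
    ultimately have "card E' > d * card V'" using less.prems(3) v(2) cV by (simp add: algebra_simps)
    moreover have "E' \<subseteq> {{u,w} | u w. u \<in> V' \<and> w \<in> V' \<and> u \<noteq> w}"
      using less.prems(2) unfolding E'_def V'_def by blast
    moreover have "card V' < card V" using cV by simp
    ultimately obtain vs where "is_cycle (V',E') vs" "length vs \<ge> d + 2"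
      using less.hyps[of V' E'] less.prems(1,4) unfolding V'_def by auto
    moreover have "V' \<subseteq> V" "E' \<subseteq> E" unfolding V'_def E'_def by auto
    ultimately show ?thesis using is_cycle_mono by blast
  next
    case False
    then have big: "\<And>v. v \<in> V \<Longrightarrow> card (nb v) > d" by auto
    have "E \<noteq> {}" using less.prems(3) by auto
    then have "V \<noteq> {}" using less.prems(2) by auto
    then obtain v where "v \<in> V" by auto
    define Ps where "Ps = {xs. set xs \<subseteq> V \<and> distinct xs \<and> xs \<noteq> [] \<and> pe xs \<subseteq> E}"
    have finPs: "finite Ps" unfolding Ps_def
      by (rule finite_subset[OF _ finite_subset_distinct[OF less.prems(1)]]) auto
    have "[v] \<in> Ps" unfolding Ps_def using \<open>v \<in> V\<close> by auto
    define m where "m = Max (length ` Ps)"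
    have "m \<in> length ` Ps" unfolding m_def using finPs \<open>[v] \<in> Ps\<close> by (intro Max_in) auto
    then obtain P where "P \<in> Ps" "length P = m" by auto
    moreover have "\<And>q. q \<in> Ps \<Longrightarrow> length q \<le> m" unfolding m_def using finPs by (intro Max_ge) auto
    ultimately have P: "P \<in> Ps" "\<And>q. q \<in> Ps \<Longrightarrow> length q \<le> length P" by auto
    have Pp: "set P \<subseteq> V" "distinct P" "P \<noteq> []" "pe P \<subseteq> E" using P(1) unfolding Ps_def by auto
    define v0 where "v0 = hd P"
    have v0: "v0 = P ! 0" "v0 \<in> V" using Pp unfolding v0_def by (auto simp: hd_conv_nth)
    have nbsub: "nb v0 \<subseteq> (\<lambda>i. P ! i) ` {1..<length P}"
    proof
      fix w assume w: "w \<in> nb v0"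
      then have wE: "{v0,w} \<in> E" unfolding nb_def by auto
      then have "w \<noteq> v0" using less.prems(2) by (auto simp: doubleton_eq_iff)
      have "w \<in> V" using nbV w by auto
      have "w \<in> set P"
      proof (rule ccontr)
        assume "w \<notin> set P"
        then have "w # P \<in> Ps" using Pp wE \<open>w \<in> V\<close> unfolding Ps_def v0_def
          by (auto simp: pe_Cons insert_commute)
        then show False using P(2) by fastforce
      qed
      then obtain i where "i < length P" "P ! i = w" by (auto simp: in_set_conv_nth)
      moreover have "i \<noteq> 0" using \<open>w \<noteq> v0\<close> v0 calculation by (metis)
      ultimately show "w \<in> (\<lambda>i. P ! i) ` {1..<length P}" by force
    qed
    have "\<exists>j. d < j \<and> j < length P \<and> P ! j \<in> nb v0"
    proof (rule ccontr)
      assume "\<not> ?thesis"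
      then have "nb v0 \<subseteq> (\<lambda>i. P ! i) ` {1..d}" using nbsub by fastforce
      then have "card (nb v0) \<le> card ((\<lambda>i. P ! i) ` {1..d})" by (simp add: card_mono)
      also have "\<dots> \<le> d" using card_image_le[of "{1..d}" "\<lambda>i. P ! i"] by simp
      finally show False using big[OF v0(2)] by simp
    qed
    then obtain j where j: "d < j" "j < length P" "P ! j \<in> nb v0" by blast
    define vs where "vs = take (Suc j) P"
    have lvs: "length vs = Suc j" unfolding vs_def using j by simp
    have "cycle_edges vs \<subseteq> E"
    proof
      fix e assume "e \<in> cycle_edges vs"
      then obtain i where i: "i < Suc j" "e = {vs ! i, vs ! ((i + 1) mod Suc j)}"
        unfolding cycle_edges_def lvs by auto
      show "e \<in> E"
      proof (cases "i < j")
        case True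
        then have "e = {P ! i, P ! Suc i}" using i unfolding vs_def by simp
        moreover have "Suc i < length P" using True j by simp
        ultimately show ?thesis using Pp(4) pe_nth by blast
      next
        case False
        then have "i = j" using i by simp
        then have "e = {P ! j, P ! 0}" using i unfolding vs_def by simp
        then show ?thesis using j(3) v0(1) unfolding nb_def by (auto simp: insert_commute)
      qed
    qed
    moreover have "set vs \<subseteq> V" "distinct vs" unfolding vs_def using Pp set_take_subset by fastforce+
    ultimately have "is_cycle (V,E) vs" unfolding is_cycle_def using lvs j less.prems(4) by auto
    then show ?thesis using lvs j by auto
  qed
qed



lemma pe_concat:
  assumes "\<forall>P\<in>set Q. P \<noteq> [] \<and> pe P \<subseteq> E"
    and "\<forall>j. Suc j < length Q \<longrightarrow> {last (Q!j), hd (Q ! Suc j)} \<in> E"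
  shows "pe (concat Q) \<subseteq> E"
  using assms
proof (induction Q)
  case (Cons P Q)
  show ?case
  proof (cases "Q = []")
    case True then show ?thesis using Cons.prems by simp
  next
    case False
    have "P \<noteq> []" using Cons.prems by auto
    moreover have "concat Q \<noteq> []" using False Cons.prems by (cases Q) auto
    moreover have "hd (concat Q) = hd (Q ! 0)" using False Cons.prems by (cases Q) auto
    moreover have "{last P, hd (Q ! 0)} \<in> E" using Cons.prems(2)[rule_format, of 0] False by simp
    moreover have "pe (concat Q) \<subseteq> E"
    proof (rule Cons.IH)
      show "\<forall>P\<in>set Q. P \<noteq> [] \<and> pe P \<subseteq> E" using Cons.prems by auto
      show "\<forall>j. Suc j < length Q \<longrightarrow> {last (Q ! j), hd (Q ! Suc j)} \<in> E"
        using Cons.prems(2) by (metis Suc_less_eq length_Cons nth_Cons_Suc)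
    qed
    ultimately show ?thesis using pe_append[of P "concat Q"] Cons.prems by auto
  qed
qed simp

lemma length_concat_ge: "\<forall>P\<in>set Q. P \<noteq> [] \<Longrightarrow> length (concat Q) \<ge> length Q"
proof (induction Q)
  case (Cons a Q)
  then have "length a \<ge> 1" by (simp add: Suc_le_eq)
  then show ?case using Cons by simp
qed simp

lemma last_concat: "Q \<noteq> [] \<Longrightarrow> \<forall>P\<in>set Q. P \<noteq> [] \<Longrightarrow> last (concat Q) = last (last Q)"
  by (induction Q) auto

lemma hd_concat: "Q \<noteq> [] \<Longrightarrow> \<forall>P\<in>set Q. P \<noteq> [] \<Longrightarrow> hd (concat Q) = hd (hd Q)"
  by (cases Q) auto

lemma cycle_from_pieces:
  fixes Pc :: "nat \<Rightarrow> 'a list" and X :: "nat \<Rightarrow> 'a set"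
  assumes pieces: "\<And>i. i < k \<Longrightarrow> distinct (Pc i) \<and> Pc i \<noteq> [] \<and> set (Pc i) \<subseteq> X i \<and> pe (Pc i) \<subseteq> E"
    and disj: "\<And>i j. i < k \<Longrightarrow> j < k \<Longrightarrow> i \<noteq> j \<Longrightarrow> X i \<inter> X j = {}"
    and junc: "\<And>j. Suc j < k \<Longrightarrow> {last (Pc j), hd (Pc (Suc j))} \<in> E"
    and wrap: "{last (Pc (k - 1)), hd (Pc 0)} \<in> E"
    and k: "k \<ge> 1"
  shows "distinct (concat (map Pc [0..<k])) \<and> length (concat (map Pc [0..<k])) \<ge> k \<and>
         set (concat (map Pc [0..<k])) \<subseteq> (\<Union>i<k. X i) \<and> cycle_edges (concat (map Pc [0..<k])) \<subseteq> E"
proof -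
  define Q where "Q = map Pc [0..<k]"
  define vs where "vs = concat Q"
  have ne: "\<forall>P\<in>set Q. P \<noteq> []" unfolding Q_def using pieces by auto
  have injP: "inj_on Pc {0..<k}"
  proof (rule inj_onI)
    fix i j assume "i \<in> {0..<k}" "j \<in> {0..<k}" "Pc i = Pc j"
    then show "i = j" using pieces[of i] pieces[of j] disj[of i j]
      by (metis atLeastLessThan_iff disjoint_iff list.set_sel(1) subsetD)
  qed
  have "distinct vs" unfolding vs_def Q_def
  proof (rule distinct_concat)
    show "distinct (map Pc [0..<k])" using injP by (simp add: distinct_map)
    show "\<And>ys. ys \<in> set (map Pc [0..<k]) \<Longrightarrow> distinct ys" using pieces by auto
    show "\<And>ys zs. ys \<in> set (map Pc [0..<k]) \<Longrightarrow> zs \<in> set (map Pc [0..<k]) \<Longrightarrow> ys \<noteq> zs \<Longrightarrow> set ys \<inter> set zs = {}"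
    proof -
      fix ys zs assume "ys \<in> set (map Pc [0..<k])" "zs \<in> set (map Pc [0..<k])" "ys \<noteq> zs"
      then obtain i j where "i < k" "j < k" "ys = Pc i" "zs = Pc j" by auto
      moreover then have "i \<noteq> j" using \<open>ys \<noteq> zs\<close> by auto
      ultimately show "set ys \<inter> set zs = {}" using pieces[of i] pieces[of j] disj[of i j] by blast
    qed
  qed
  moreover have "length vs \<ge> k" unfolding vs_def using length_concat_ge[OF ne] by (simp add: Q_def)
  moreover have "set vs \<subseteq> (\<Union>i<k. X i)" unfolding vs_def Q_def using pieces by fastforce
  moreover have "cycle_edges vs \<subseteq> E"
  proof -
    have Qne: "Q \<noteq> []" unfolding Q_def using k by simp
    have vsne: "vs \<noteq> []" using calculation(2) k by auto
    have "pe vs \<subseteq> E" unfolding vs_def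
    proof (rule pe_concat)
      show "\<forall>P\<in>set Q. P \<noteq> [] \<and> pe P \<subseteq> E" unfolding Q_def using pieces by auto
      show "\<forall>j. Suc j < length Q \<longrightarrow> {last (Q ! j), hd (Q ! Suc j)} \<in> E"
        unfolding Q_def using junc by (auto simp del: upt_Suc)
    qed
    moreover have "last vs = last (Pc (k - 1))" unfolding vs_def using last_concat[OF Qne ne] k
      by (simp add: Q_def last_map)
    moreover have "hd vs = hd (Pc 0)" unfolding vs_def using hd_concat[OF Qne ne] k
      by (simp add: Q_def hd_map)
    ultimately have "pe (vs @ [hd vs]) \<subseteq> E" using pe_append[of vs "[hd vs]"] vsne wrap by auto
    then show ?thesis using cycle_edges_pe[OF vsne] by auto
  qed
  ultimately show ?thesis unfolding vs_def Q_def by auto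
qed

lemma card_cycle_edges:
  assumes "distinct vs" "length vs \<ge> 3"
  shows "card (cycle_edges vs) = length vs"
proof -
  let ?n = "length vs"
  have "inj_on (\<lambda>i. {vs ! i, vs ! ((i + 1) mod ?n)}) {..<?n}"
  proof (rule inj_onI)
    fix i j assume i: "i \<in> {..<?n}" and j: "j \<in> {..<?n}"
      and eq: "{vs ! i, vs ! ((i + 1) mod ?n)} = {vs ! j, vs ! ((j + 1) mod ?n)}"
    have "?n > 0" using assms by linarith
    then have mi: "(i+1) mod ?n < ?n" "(j+1) mod ?n < ?n" by simp_all
    show "i = j"
    proof (rule ccontr)
      assume "i \<noteq> j"
      then have "vs ! i \<noteq> vs ! j" using i j assms(1) nth_eq_iff_index_eq by auto
      then have "vs ! i = vs ! ((j + 1) mod ?n)" "vs ! ((i + 1) mod ?n) = vs ! j" using eq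
        by (auto simp: doubleton_eq_iff)
      then have A: "i = (j + 1) mod ?n" "(i + 1) mod ?n = j"
        using i j mi assms(1) nth_eq_iff_index_eq by (metis lessThan_iff)+
      show False
      proof (cases "i + 1 < ?n")
        case True
        then have "j = i + 1" using A by simp
        show False
        proof (cases "j + 1 < ?n")
          case True then have "(j+1) mod ?n = j + 1" by (intro mod_less)
          then show False using A(1) \<open>j = i+1\<close> by linarith
        next
          case False then have jn: "j + 1 = ?n" using j by simp
          then have "(j+1) mod ?n = 0" by simp
          then have "i = 0" using A(1) by linarith
          then show False using jn \<open>j = i+1\<close> assms(2) by linarith
        qed
      next
        case False then have "i + 1 = ?n" using i by simp
        then have "j = 0" using A by simp
        then have "i = 1" using A assms(2) by simp
        then show False using \<open>i + 1 = ?n\<close> assms(2) by simp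
      qed
    qed
  qed
  then show ?thesis unfolding cycle_edges_def by (simp add: card_image)
qed



lemma join_walk:
  assumes "Wy \<noteq> []" "Wx \<noteq> []" "hd Wy = hd Wx"
  shows "hd (rev (tl Wy) @ Wx) = last Wy \<and> last (rev (tl Wy) @ Wx) = last Wx \<and>
         pe (rev (tl Wy) @ Wx) \<subseteq> pe Wy \<union> pe Wx \<and> set (rev (tl Wy) @ Wx) \<subseteq> set Wy \<union> set Wx"
proof (cases "tl Wy = []")
  case True
  then have "Wy = [hd Wy]" using assms(1) by (cases Wy) auto
  then have "last Wy = hd Wx" using assms(3) by (metis last.simps)
  then show ?thesis using True assms by auto
next
  case False
  have "hd (rev (tl Wy)) = last Wy" using False assms(1) by (cases Wy) (auto simp: hd_rev)
  moreover have "pe (rev (tl Wy) @ Wx) = pe (tl Wy) \<union> pe Wx \<union> {{hd (tl Wy), hd Wx}}"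
    using pe_append[of "rev (tl Wy)" Wx] False assms(2) pe_rev[of "tl Wy"] by (simp add: last_rev)
  moreover have "pe Wy = insert {hd Wy, hd (tl Wy)} (pe (tl Wy))"
    using pe_Cons[of "tl Wy" "hd Wy"] False assms(1) by simp
  moreover have "set (tl Wy) \<subseteq> set Wy" by (simp add: list.set_sel(2) subsetI assms(1))
  ultimately show ?thesis using False assms by (auto simp: insert_commute)
qed



lemma main_bound:
  fixes G :: "'a graph" and c :: "'a set \<Rightarrow> nat" and f :: "nat \<Rightarrow> nat"
  assumes col: "c ` snd G \<subseteq> {..<M}"
    and cyc: "\<And>vs. is_cycle G vs \<Longrightarrow> card (c ` cycle_edges vs) \<ge> min (f (length vs)) (2*r+2)"
    and L: "f L \<ge> 2*r+2" "L \<ge> 1" and mf: "mono f"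
    and model: "shallow_minor_model G r Ts H" and fin: "finite (fst H)"
  shows "card (snd H) \<le> 2^M * (L * card (fst H))"
proof -
  have Tsr: "\<And>T. T \<in> Ts \<Longrightarrow> rooted_subtree G r T" using model unfolding shallow_minor_model_def by auto
  have disj: "\<And>T1 T2. T1 \<in> Ts \<Longrightarrow> T2 \<in> Ts \<Longrightarrow> T1 \<noteq> T2 \<Longrightarrow> fst T1 \<inter> fst T2 = {}"
    using model unfolding shallow_minor_model_def by auto
  have HTs: "fst H \<subseteq> Ts" using model unfolding shallow_minor_model_def by auto
  have Hedges: "snd H \<subseteq> {{T1, T2} | T1 T2. T1 \<in> fst H \<and> T2 \<in> fst H \<and> T1 \<noteq> T2 \<and> trees_adjacent G T1 T2}"
    using model unfolding shallow_minor_model_def by auto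
  have Tsub: "\<And>T. T \<in> Ts \<Longrightarrow> fst T \<subseteq> fst G \<and> snd T \<subseteq> snd G" using Tsr unfolding rooted_subtree_def by auto
  define rt :: "'a graph \<Rightarrow> 'a" where "rt T = (SOME root. root \<in> fst T \<and> (\<forall>v\<in>fst T. dist_le T root v r))" for T
  have rt: "rt T \<in> fst T \<and> (\<forall>v\<in>fst T. dist_le T (rt T) v r)" if "T \<in> Ts" for T
    unfolding rt_def by (rule someI_ex) (use Tsr[OF that] in \<open>auto simp: rooted_subtree_def\<close>)
  define W :: "'a graph \<Rightarrow> 'a \<Rightarrow> 'a list" where "W T v = (SOME xs. is_walk T xs \<and> hd xs = rt T \<and> last xs = v \<and> length xs \<le> r+1)" for T v
  have W: "is_walk T (W T v) \<and> hd (W T v) = rt T \<and> last (W T v) = v \<and> length (W T v) \<le> r+1"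
    if "T \<in> Ts" "v \<in> fst T" for T v
    unfolding W_def by (rule someI_ex) (use rt[OF that(1)] that(2) in \<open>auto simp: dist_le_def\<close>)
  have Wne: "W T v \<noteq> []" and Wset: "set (W T v) \<subseteq> fst T" and Wpe: "pe (W T v) \<subseteq> snd T"
    if "T \<in> Ts" "v \<in> fst T" for T v
    using W[OF that] walk_pe[of T "W T v"] unfolding is_walk_def by auto
  define Pw :: "'a graph set \<Rightarrow> ('a graph \<Rightarrow> 'a) \<Rightarrow> bool" where
    "Pw e g \<longleftrightarrow> (\<forall>T\<in>e. g T \<in> fst T) \<and> (\<exists>T1 T2. e = {T1,T2} \<and> T1 \<noteq> T2 \<and> {g T1, g T2} \<in> snd G)" for e g
  define wf :: "'a graph set \<Rightarrow> 'a graph \<Rightarrow> 'a" where "wf e = (SOME g. Pw e g)" for e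
  have wfex: "(\<forall>T\<in>e. wf e T \<in> fst T) \<and> (\<exists>T1 T2. e = {T1,T2} \<and> T1 \<noteq> T2 \<and> {wf e T1, wf e T2} \<in> snd G)"
    if he: "e \<in> snd H" for e
  proof -
    obtain T1 T2 where e: "e = {T1,T2}" "T1 \<noteq> T2" "trees_adjacent G T1 T2" using Hedges he by blast
    then obtain x y where xy: "x \<in> fst T1" "y \<in> fst T2" "{x,y} \<in> snd G" unfolding trees_adjacent_def by blast
    let ?g = "\<lambda>T. if T = T1 then x else y"
    have "Pw e ?g" unfolding Pw_def
    proof (intro conjI)
      show "\<forall>T\<in>e. ?g T \<in> fst T" using e xy by auto
      show "\<exists>T1' T2'. e = {T1', T2'} \<and> T1' \<noteq> T2' \<and> {?g T1', ?g T2'} \<in> snd G"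
        by (rule exI[of _ T1], rule exI[of _ T2]) (use e xy in \<open>simp add: eq_commute[of T2 T1]\<close>)
    qed
    then have "Pw e (SOME g. Pw e g)" by (rule someI[of "Pw e"])
    then show ?thesis unfolding Pw_def wf_def by blast
  qed
  have eH: "e \<subseteq> fst H" if "e \<in> snd H" for e using Hedges that by blast
  have wf1: "wf e T \<in> fst T" if "e \<in> snd H" "T \<in> e" for e T using wfex that by blast
  have wf2: "{wf e A, wf e B} \<in> snd G \<and> wf e ` e = {wf e A, wf e B}"
    if he: "e \<in> snd H" "A \<in> e" "B \<in> e" "A \<noteq> B" for e A B
  proof -
    obtain T1 T2 where "e = {T1,T2}" "T1 \<noteq> T2" "{wf e T1, wf e T2} \<in> snd G" using wfex[OF he(1)] by blast
    then show ?thesis using he by (auto simp: insert_commute)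
  qed
  define col :: "'a graph set \<Rightarrow> nat set" where "col e = insert (c (wf e ` e)) (\<Union>T\<in>e. c ` pe (W T (wf e T)))" for e
  have colM: "col e \<subseteq> {..<M}" if he: "e \<in> snd H" for e
  proof -
    obtain A B where AB: "e = {A,B}" "A \<noteq> B" using Hedges he by blast
    have "c (wf e ` e) \<in> {..<M}" using wf2[OF he, of A B] AB col by auto
    moreover have "c ` pe (W T (wf e T)) \<subseteq> {..<M}" if "T \<in> e" for T
    proof -
      have "T \<in> Ts" using eH[OF \<open>e \<in> snd H\<close>] HTs that by auto
      then have "pe (W T (wf e T)) \<subseteq> snd G" using Wpe[of T "wf e T"] wf1[OF \<open>e \<in> snd H\<close> that] Tsub by blast
      then show ?thesis using col by auto
    qed
    ultimately show ?thesis unfolding col_def by auto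
  qed
  have colcard: "card (col e) \<le> 2*r+1" if he: "e \<in> snd H" for e
  proof -
    obtain A B where AB: "e = {A,B}" "A \<noteq> B" using Hedges he by blast
    have cT: "card (c ` pe (W T (wf e T))) \<le> r" if "T \<in> e" for T
    proof -
      have "T \<in> Ts" using eH[OF \<open>e \<in> snd H\<close>] HTs that by auto
      have "card (c ` pe (W T (wf e T))) \<le> card (pe (W T (wf e T)))" by (rule card_image_le[OF finite_pe])
      also have "\<dots> \<le> length (W T (wf e T)) - 1" by (rule card_pe)
      also have "\<dots> \<le> r" using W[OF \<open>T \<in> Ts\<close> wf1[OF \<open>e \<in> snd H\<close> that]] by linarith
      finally show ?thesis .
    qed
    have "(\<Union>T\<in>e. c ` pe (W T (wf e T))) = c ` pe (W A (wf e A)) \<union> c ` pe (W B (wf e B))" using AB by auto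
    then have "card (\<Union>T\<in>e. c ` pe (W T (wf e T))) \<le> r + r"
      using card_Un_le[of "c ` pe (W A (wf e A))" "c ` pe (W B (wf e B))"] cT[of A] cT[of B] AB by auto
    moreover have "card (col e) \<le> Suc (card (\<Union>T\<in>e. c ` pe (W T (wf e T))))"
      unfolding col_def using AB by (simp add: card_insert_if finite_pe)
    ultimately show ?thesis by simp
  qed
  have key: "card {e\<in>snd H. col e = S} \<le> L * card (fst H)" for S
  proof (rule ccontr)
    assume nb: "\<not> ?thesis"
    define ES where "ES = {e\<in>snd H. col e = S}"
    have big: "card ES > L * card (fst H)" using nb unfolding ES_def by simp
    have ESform: "ES \<subseteq> {{u,v} | u v. u \<in> fst H \<and> v \<in> fst H \<and> u \<noteq> v}" using Hedges unfolding ES_def by blast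
    obtain us where us: "is_cycle (fst H, ES) us" "length us \<ge> L + 2"
      using dense_cycle[OF fin ESform big L(2)] by blast
    have "ES \<noteq> {}" using big by auto
    then obtain e0 where e0: "e0 \<in> snd H" "col e0 = S" unfolding ES_def by auto
    have cardS: "card S \<le> 2*r+1" using colcard[OF e0(1)] e0(2) by simp
    have finS: "finite S" using colM[OF e0(1)] e0(2) finite_subset by blast
    define k where "k = length us"
    have k3: "k \<ge> 3" and kL: "k \<ge> L + 2" using us unfolding k_def is_cycle_def by auto
    have usd: "distinct us" and usV: "set us \<subseteq> fst H" and usE: "cycle_edges us \<subseteq> ES"
      using us(1) unfolding is_cycle_def by auto
    define a where "a i = us ! (i mod k)" for i
    have kpos: "k > 0" using k3 by simp
    have aH: "a i \<in> fst H" for i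
    proof -
      have "i mod k < length us" using kpos k_def by simp
      then show ?thesis unfolding a_def using usV nth_mem by blast
    qed
    have aT: "a i \<in> Ts" for i using aH HTs by auto
    have aneq: "a i \<noteq> a j" if "i mod k \<noteq> j mod k" for i j
    proof -
      have "i mod k < length us" "j mod k < length us" using kpos k_def by simp_all
      then show ?thesis unfolding a_def using that usd nth_eq_iff_index_eq by metis
    qed
    have modsuc: "Suc i mod k \<noteq> i mod k" for i
    proof -
      have "Suc i mod k = Suc (i mod k) mod k" by (simp add: mod_Suc_eq)
      have "i mod k < k" using kpos by simp
      show ?thesis
      proof (cases "Suc (i mod k) < k")
        case True
        then show ?thesis using \<open>Suc i mod k = Suc (i mod k) mod k\<close> by simp
      next
        case False
        then have "Suc (i mod k) = k" using \<open>i mod k < k\<close> by simp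
        then have "Suc i mod k = 0" using \<open>Suc i mod k = Suc (i mod k) mod k\<close> by simp
        moreover have "i mod k \<noteq> 0" using \<open>Suc (i mod k) = k\<close> k3 by linarith
        ultimately show ?thesis by simp
      qed
    qed
    define e where "e i = {a i, a (Suc i)}" for i
    have eES: "e i \<in> ES" for i
    proof -
      have "i mod k < length us" using kpos k_def by simp
      then have "{us ! (i mod k), us ! ((i mod k + 1) mod length us)} \<in> cycle_edges us"
        unfolding cycle_edges_def by auto
      moreover have "(i mod k + 1) mod k = Suc i mod k" by (simp add: mod_Suc_eq)
      ultimately show ?thesis using usE unfolding e_def a_def k_def by auto
    qed
    have eH': "e i \<in> snd H" and colE: "col (e i) = S" for i using eES[of i] unfolding ES_def by auto
    define x where "x i = wf (e i) (a i)" for i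
    define y where "y i = wf (e i) (a (Suc i))" for i
    have ane: "a i \<noteq> a (Suc i)" for i using aneq[OF modsuc[symmetric]] by simp
    define EG where "EG = {d\<in>snd G. c d \<in> S}"
    have xyG: "{x i, y i} \<in> EG" for i
    proof -
      have "{x i, y i} \<in> snd G \<and> wf (e i) ` e i = {x i, y i}"
        using wf2[OF eH'[of i], of "a i" "a (Suc i)"] ane unfolding x_def y_def e_def by auto
      moreover have "c (wf (e i) ` e i) \<in> col (e i)" unfolding col_def by simp
      ultimately show ?thesis using colE unfolding EG_def by auto
    qed
    have xin: "x i \<in> fst (a i)" and yin: "y i \<in> fst (a (Suc i))" for i
      using wf1[OF eH'] unfolding x_def y_def e_def by auto
    have pe_col: "pe (W T (wf (e i) T)) \<subseteq> EG" if "T \<in> e i" for T i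
    proof -
      have "T \<in> Ts" using that aT unfolding e_def by auto
      then have "pe (W T (wf (e i) T)) \<subseteq> snd G" using Wpe[of T "wf (e i) T"] wf1[OF eH' that] Tsub by blast
      moreover have "c ` pe (W T (wf (e i) T)) \<subseteq> col (e i)" using that unfolding col_def by blast
      ultimately show ?thesis using colE unfolding EG_def by auto
    qed
    have pcex: "\<exists>ys. distinct ys \<and> ys \<noteq> [] \<and> hd ys = y i \<and> last ys = x (Suc i) \<and> set ys \<subseteq> fst (a (Suc i)) \<and> pe ys \<subseteq> EG" for i
    proof -
      define T where "T = a (Suc i)"
      have T: "T \<in> Ts" unfolding T_def by (rule aT)
      define Wy where "Wy = W T (y i)"
      define Wx where "Wx = W T (x (Suc i))"
      have yT: "y i \<in> fst T" and xT: "x (Suc i) \<in> fst T" unfolding T_def using yin xin by auto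
      have props: "Wy \<noteq> []" "Wx \<noteq> []" "hd Wy = hd Wx" "last Wy = y i" "last Wx = x (Suc i)"
        "set Wy \<subseteq> fst T" "set Wx \<subseteq> fst T"
        unfolding Wy_def Wx_def using Wne[OF T yT] Wne[OF T xT] W[OF T yT] W[OF T xT] Wset[OF T yT] Wset[OF T xT] by auto
      have "pe Wy \<subseteq> EG" unfolding Wy_def y_def T_def by (rule pe_col) (simp add: e_def)
      moreover have "pe Wx \<subseteq> EG" unfolding Wx_def x_def T_def by (rule pe_col) (simp add: e_def)
      moreover note jw = join_walk[OF props(1-3)]
      obtain ys where ys: "distinct ys" "ys \<noteq> []" "hd ys = hd (rev (tl Wy) @ Wx)" "last ys = last (rev (tl Wy) @ Wx)"
        "set ys \<subseteq> set (rev (tl Wy) @ Wx)" "pe ys \<subseteq> pe (rev (tl Wy) @ Wx)"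
        using walk_shorten[of "rev (tl Wy) @ Wx"] props(2) by auto
      have "hd ys = y i" "last ys = x (Suc i)" using ys(3,4) jw props by auto
      moreover have "set ys \<subseteq> fst (a (Suc i))" using ys(5) jw props unfolding T_def by blast
      moreover have "pe ys \<subseteq> EG" using ys(6) jw calculation by blast
      ultimately show ?thesis using ys(1,2) by blast
    qed
    define Pc where "Pc i = (SOME ys. distinct ys \<and> ys \<noteq> [] \<and> hd ys = y i \<and> last ys = x (Suc i) \<and> set ys \<subseteq> fst (a (Suc i)) \<and> pe ys \<subseteq> EG)" for i
    have Pc: "distinct (Pc i) \<and> Pc i \<noteq> [] \<and> hd (Pc i) = y i \<and> last (Pc i) = x (Suc i) \<and> set (Pc i) \<subseteq> fst (a (Suc i)) \<and> pe (Pc i) \<subseteq> EG" for i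
      unfolding Pc_def by (rule someI_ex) (rule pcex)
    have sucmod: "Suc i mod k \<noteq> Suc j mod k" if "i < k" "j < k" "i \<noteq> j" for i j
    proof -
      have "Suc i mod k = (if Suc i = k then 0 else Suc i)" using that(1) by auto
      moreover have "Suc j mod k = (if Suc j = k then 0 else Suc j)" using that(2) by auto
      ultimately show ?thesis using that by auto
    qed
    have cp: "distinct (concat (map Pc [0..<k])) \<and> length (concat (map Pc [0..<k])) \<ge> k \<and>
         set (concat (map Pc [0..<k])) \<subseteq> (\<Union>i<k. fst (a (Suc i))) \<and> cycle_edges (concat (map Pc [0..<k])) \<subseteq> EG"
    proof (rule cycle_from_pieces)
      show "\<And>i. i < k \<Longrightarrow> distinct (Pc i) \<and> Pc i \<noteq> [] \<and> set (Pc i) \<subseteq> fst (a (Suc i)) \<and> pe (Pc i) \<subseteq> EG"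
        using Pc by blast
      show "fst (a (Suc i)) \<inter> fst (a (Suc j)) = {}" if "i < k" "j < k" "i \<noteq> j" for i j
        using disj[OF aT aT aneq[OF sucmod[OF that]]] .
      show "{last (Pc j), hd (Pc (Suc j))} \<in> EG" if "Suc j < k" for j
        using Pc[of j] Pc[of "Suc j"] xyG[of "Suc j"] by simp
      have "Suc k mod k = Suc (k mod k) mod k" by (rule mod_Suc_eq[symmetric])
      then have "Suc k mod k = Suc 0 mod k" by simp
      then have "a k = a 0" "a (Suc k) = a (Suc 0)" unfolding a_def by simp_all
      then have "x k = x 0" unfolding x_def e_def by simp
      moreover have "Suc (k - 1) = k" using k3 by simp
      ultimately show "{last (Pc (k - 1)), hd (Pc 0)} \<in> EG" using Pc[of "k-1"] Pc[of 0] xyG[of 0] by simp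
      show "k \<ge> 1" using k3 by simp
    qed
    define vs where "vs = concat (map Pc [0..<k])"
    have d: "distinct vs" and l: "k \<le> length vs" and sv: "set vs \<subseteq> (\<Union>i<k. fst (a (Suc i)))"
      and ce: "cycle_edges vs \<subseteq> EG"
    proof -
      have cp': "distinct vs \<and> k \<le> length vs \<and> set vs \<subseteq> (\<Union>i<k. fst (a (Suc i))) \<and> cycle_edges vs \<subseteq> EG"
        using cp unfolding vs_def .
      show "distinct vs" "k \<le> length vs" "set vs \<subseteq> (\<Union>i<k. fst (a (Suc i)))" "cycle_edges vs \<subseteq> EG"
        using cp' by simp_all
    qed
    have "fst (a (Suc i)) \<subseteq> fst G" for i using Tsub aT by blast
    then have svG: "set vs \<subseteq> fst G" using sv by blast
    have ceG: "cycle_edges vs \<subseteq> snd G" using ce unfolding EG_def by blast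
    have "length vs \<ge> 3" using l k3 by linarith
    then have cycG: "is_cycle G vs" unfolding is_cycle_def using d svG ceG by blast
    have "L \<le> length vs" using l kL by linarith
    then have "f L \<le> f (length vs)" by (rule monoD[OF mf])
    then have "card (c ` cycle_edges vs) \<ge> 2*r+2" using cyc[OF cycG] L(1) by simp
    moreover have "c ` cycle_edges vs \<subseteq> S" using ce unfolding EG_def by blast
    then have "card (c ` cycle_edges vs) \<le> card S" using finS by (rule card_mono[rotated])
    ultimately show False using cardS by simp
  qed
  have "snd H = (\<Union>S\<in>Pow {..<M}. {e\<in>snd H. col e = S})" using colM by auto
  then have "card (snd H) \<le> (\<Sum>S\<in>Pow {..<M}. card {e\<in>snd H. col e = S})"
    using card_UN_le[of "Pow {..<M}" "\<lambda>S. {e\<in>snd H. col e = S}"] by simp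
  also have "\<dots> \<le> (\<Sum>S\<in>Pow {..<M}. L * card (fst H))" by (rule sum_mono) (rule key)
  also have "\<dots> = 2^M * (L * card (fst H))" by (simp add: card_Pow)
  finally show ?thesis .
qed



lemma colouring_exists:
  fixes G :: "'a graph" and f :: "nat \<Rightarrow> nat"
  assumes sg: "simple_graph G" and fx: "\<forall>x. f x \<le> x"
  shows "\<exists>k. \<exists>c :: 'a set \<Rightarrow> nat. c ` snd G \<subseteq> {..<k} \<and>
      (\<forall>vs. is_cycle G vs \<longrightarrow> card (c ` cycle_edges vs) \<ge> min (f (length vs)) (p + 1))"
proof -
  have "snd G \<subseteq> Pow (fst G)" using sg unfolding simple_graph_def by auto
  moreover have "finite (fst G)" using sg unfolding simple_graph_def by auto
  ultimately have finE: "finite (snd G)" by (meson finite_Pow_iff finite_subset)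
  obtain h where h: "bij_betw h (snd G) {0..<card (snd G)}" using ex_bij_betw_finite_nat[OF finE] by blast
  have "h ` snd G \<subseteq> {..<card (snd G)}" using h unfolding bij_betw_def by auto
  moreover have "card (h ` cycle_edges vs) \<ge> min (f (length vs)) (p + 1)" if "is_cycle G vs" for vs
  proof -
    have "cycle_edges vs \<subseteq> snd G" "distinct vs" "length vs \<ge> 3" using that unfolding is_cycle_def by auto
    have "inj_on h (cycle_edges vs)" by (rule inj_on_subset[OF bij_betw_imp_inj_on[OF h] \<open>cycle_edges vs \<subseteq> snd G\<close>])
    then have "card (h ` cycle_edges vs) = card (cycle_edges vs)" by (rule card_image)
    also have "\<dots> = length vs" using card_cycle_edges \<open>distinct vs\<close> \<open>length vs \<ge> 3\<close> by blast
    finally have eq: "card (h ` cycle_edges vs) = length vs" .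
    have "min (f (length vs)) (p + 1) \<le> f (length vs)" by (rule min.cobounded1)
    also have "\<dots> \<le> length vs" using fx by blast
    finally show ?thesis using eq by simp
  qed
  ultimately show ?thesis by blast
qed

theorem mainTheorem4:
  fixes C :: "'a graph set" and f :: "nat \<Rightarrow> nat"
  assumes "\<forall>G\<in>C. simple_graph G"
    and "\<forall>M. \<exists>x. f x \<ge> M"
    and "mono f"
    and "\<forall>x. f x \<le> x"
    and "\<forall>r\<ge>1. \<exists>M. \<forall>G\<in>C. N_f f G r \<le> M"
  shows "bounded_expansion C"
  unfolding bounded_expansion_def
proof
  fix r :: nat
  have "2*r+1 \<ge> (1::nat)" by simp
  then obtain M where M: "\<forall>G\<in>C. N_f f G (2*r+1) \<le> M" using assms(5) by blast
  obtain L where L: "f L \<ge> 2*r+2" using assms(2) by blast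
  have L1: "L \<ge> 1" using L assms(4)[rule_format, of L] by linarith
  show "\<exists>B::real. \<forall>G\<in>C. nabla r G \<le> B"
  proof (intro exI ballI)
    fix G assume GC: "G \<in> C"
    define P where "P k \<longleftrightarrow> (\<exists>c :: 'a set \<Rightarrow> nat. c ` snd G \<subseteq> {..<k} \<and>
      (\<forall>vs. is_cycle G vs \<longrightarrow> card (c ` cycle_edges vs) \<ge> min (f (length vs)) (2*r+1 + 1)))" for k
    have "\<exists>k. P k" unfolding P_def by (rule colouring_exists) (use assms(1,4) GC in auto)
    then have "P (LEAST k. P k)" by (rule LeastI_ex)
    moreover have "(LEAST k. P k) = N_f f G (2*r+1)" unfolding N_f_def P_def by simp
    ultimately obtain c :: "'a set \<Rightarrow> nat" where c: "c ` snd G \<subseteq> {..<N_f f G (2*r+1)}"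
      "\<And>vs. is_cycle G vs \<Longrightarrow> card (c ` cycle_edges vs) \<ge> min (f (length vs)) (2*r+1 + 1)"
      unfolding P_def by auto
    have cM: "c ` snd G \<subseteq> {..<M}" using c(1) M GC by fastforce
    have cyc: "\<And>vs. is_cycle G vs \<Longrightarrow> card (c ` cycle_edges vs) \<ge> min (f (length vs)) (2*r+2)"
    proof -
      fix vs assume "is_cycle G vs"
      have "(2*r+1 + 1) = (2*r+2::nat)" by simp
      then show "card (c ` cycle_edges vs) \<ge> min (f (length vs)) (2*r+2)" using c(2)[OF \<open>is_cycle G vs\<close>] by simp
    qed
    let ?X = "{real (card (snd H)) / real (card (fst H)) | H. \<exists>Ts. shallow_minor_model G r Ts H}"
    have "?X \<noteq> {}"
    proof -
      have "shallow_minor_model G r {} ({}, {})" unfolding shallow_minor_model_def by auto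
      then show ?thesis by blast
    qed
    moreover have "x \<le> real (2^M * L)" if "x \<in> ?X" for x
    proof -
      obtain H Ts where x: "x = real (card (snd H)) / real (card (fst H))" and mod: "shallow_minor_model G r Ts H"
        using \<open>x \<in> ?X\<close> by blast
      show ?thesis
      proof (cases "finite (fst H) \<and> card (fst H) > 0")
        case True
        then have "card (snd H) \<le> 2^M * (L * card (fst H))"
          using main_bound[OF cM cyc L L1 assms(3) mod] by blast
        then have "real (card (snd H)) \<le> real (2^M * (L * card (fst H)))" by (rule of_nat_mono)
        then have "real (card (snd H)) \<le> real (2^M * L) * real (card (fst H))"
          by (simp add: mult.assoc)
        then show ?thesis unfolding x using True by (simp add: divide_le_eq)
      next
        case False
        then have "card (fst H) = 0" by auto
        then show ?thesis unfolding x by simp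
      qed
    qed
    ultimately show "nabla r G \<le> real (2^M * L)" unfolding nabla_def by (rule cSup_least)
  qed
qed


end
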